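(* Let $k\ge2$ and $G=\mathrm{BS}(1,k)=\langle a,t\mid tat^{-1}=a^k\rangle$. For every finite subset $A\subseteq G$ there exists $g\in G$ such that $c(gA)=|A|$, i.e. the elements of $gA$ lie in pairwise distinct conjugacy classes.
   Context: For $B\subseteq G$, $c(B)$ is the number of distinct conjugacy classes of $G$ meeting $B$. *)

theory Defs
  imports Complex_Main "HOL-Algebra.Group"
begin

text \<open>Concrete model of BS(1,k) = < a, t | t a t^-1 = a^k > as the affine group
  {z \<mapsto> k^n z + x : x \<in> Z[1/k], n \<in> Z}; the pair (x,n) is the map z \<mapsto> k^n z + x.\<close>

definition BS :: "int \<Rightarrow> (rat \<times> int) monoid" where
  "BS k = \<lparr> carrier = {(x, n). \<exists>m::nat. x * of_int k ^ m \<in> \<int>},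
            mult = (\<lambda>(x, n) (y, m). (x + of_int k powi n * y, n + m)),
            one = (0, 0) \<rparr>"

definition BS_a :: "rat \<times> int" where "BS_a = (1, 0)"
definition BS_t :: "rat \<times> int" where "BS_t = (0, 1)"

definition conj_class :: "('a, 'b) monoid_scheme \<Rightarrow> 'a \<Rightarrow> 'a set" where
  "conj_class G x = {g \<otimes>\<^bsub>G\<^esub> x \<otimes>\<^bsub>G\<^esub> inv\<^bsub>G\<^esub> g | g. g \<in> carrier G}"

definition num_conj_classes :: "('a, 'b) monoid_scheme \<Rightarrow> 'a set \<Rightarrow> nat" where
  "num_conj_classes G B = card (conj_class G ` B)"

end

theory Submission
  imports Defs
begin


definition inR :: "int \<Rightarrow> rat \<Rightarrow> bool" where
  "inR k r \<longleftrightarrow> (\<exists>e::nat. r * of_int k ^ e \<in> \<int>)"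

lemma inR_mono:
  assumes "r * of_int k ^ e \<in> \<int>" "e \<le> e'"
  shows "r * (of_int k :: rat) ^ e' \<in> \<int>"
proof -
  have "r * (of_int k :: rat) ^ e' = (r * of_int k ^ e) * of_int (k ^ (e' - e))"
    using assms(2) by (simp add: power_add[symmetric])
  thus ?thesis using assms(1) by (metis Ints_mult Ints_of_int)
qed

lemma inR_int: "inR k (of_int z)"
  unfolding inR_def by (rule exI[of _ 0]) simp

lemma inR_add: assumes "inR k a" "inR k b" shows "inR k (a + b)"
proof -
  obtain e1 e2 where 1: "a * of_int k ^ e1 \<in> \<int>" and 2: "b * of_int k ^ e2 \<in> \<int>"
    using assms unfolding inR_def by blast
  have "a * of_int k ^ (e1 + e2) \<in> \<int>" "b * of_int k ^ (e1 + e2) \<in> \<int>"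
    using inR_mono[OF 1] inR_mono[OF 2] by auto
  hence "(a + b) * of_int k ^ (e1 + e2) \<in> \<int>" by (simp add: distrib_right)
  thus ?thesis unfolding inR_def by blast
qed

lemma inR_mult: assumes "inR k a" "inR k b" shows "inR k (a * b)"
proof -
  obtain e1 e2 where 1: "a * of_int k ^ e1 \<in> \<int>" and 2: "b * of_int k ^ e2 \<in> \<int>"
    using assms unfolding inR_def by blast
  have "(a * b) * of_int k ^ (e1 + e2) = (a * of_int k ^ e1) * (b * of_int k ^ e2)"
    by (simp add: power_add algebra_simps)
  hence "(a * b) * of_int k ^ (e1 + e2) \<in> \<int>" using 1 2 by (metis Ints_mult)
  thus ?thesis unfolding inR_def by blast
qed

lemma inR_uminus: assumes "inR k a" shows "inR k (- a)"
  using inR_mult[OF inR_int[of k "-1"] assms] by simp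

lemma inR_diff: assumes "inR k a" "inR k b" shows "inR k (a - b)"
  using inR_add[OF assms(1) inR_uminus[OF assms(2)]] by simp

lemma inR_div_pow: assumes "inR k a" shows "inR k (a / of_int k ^ n)"
proof -
  obtain e where 1: "a * of_int k ^ e \<in> \<int>" using assms unfolding inR_def by blast
  show ?thesis
  proof (cases "k = 0")
    case True thus ?thesis using assms by (cases n) (auto simp: inR_def)
  next
    case False
    have "(a / of_int k ^ n) * of_int k ^ (e + n) = a * of_int k ^ e"
      using False by (simp add: power_add)
    thus ?thesis using 1 unfolding inR_def by metis
  qed
qed

lemma inR_powi: assumes "k \<noteq> 0" shows "inR k ((of_int k :: rat) powi m)"
proof (cases "m \<ge> 0")
  case True
  then obtain n where "m = int n" by (metis nonneg_eq_int)
  thus ?thesis using inR_int[of k "k ^ n"] by simp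
next
  case False
  then obtain n where n: "m = - int n" by (metis nonpos_int_cases not_le order.strict_implies_order)
  have "(of_int k :: rat) powi m = 1 / of_int k ^ n" using n by (simp add: power_int_minus divide_inverse)
  thus ?thesis using inR_div_pow[OF inR_int[of k 1]] by simp
qed

lemma BS_mult: "(x, n) \<otimes>\<^bsub>BS k\<^esub> (y, m) = (x + of_int k powi n * y, n + m)"
  by (simp add: BS_def)

lemma BS_carrier: "p \<in> carrier (BS k) \<longleftrightarrow> inR k (fst p)"
  by (cases p) (simp add: BS_def inR_def)

lemma BS_one: "\<one>\<^bsub>BS k\<^esub> = (0, 0)" by (simp add: BS_def)

lemma BS_group: assumes "k \<noteq> 0" shows "group (BS k)"
proof (rule groupI)
  fix x y assume "x \<in> carrier (BS k)" "y \<in> carrier (BS k)"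
  thus "x \<otimes>\<^bsub>BS k\<^esub> y \<in> carrier (BS k)"
    by (cases x, cases y) (auto simp: BS_mult BS_carrier intro!: inR_add inR_mult inR_powi assms)
next
  show "\<one>\<^bsub>BS k\<^esub> \<in> carrier (BS k)" using inR_int[of k 0] by (simp add: BS_one BS_carrier)
next
  fix x y z assume "x \<in> carrier (BS k)" "y \<in> carrier (BS k)" "z \<in> carrier (BS k)"
  show "x \<otimes>\<^bsub>BS k\<^esub> y \<otimes>\<^bsub>BS k\<^esub> z = x \<otimes>\<^bsub>BS k\<^esub> (y \<otimes>\<^bsub>BS k\<^esub> z)"
    using assms by (cases x, cases y, cases z) (simp add: BS_mult power_int_add algebra_simps)
next
  fix x assume "x \<in> carrier (BS k)"
  thus "\<one>\<^bsub>BS k\<^esub> \<otimes>\<^bsub>BS k\<^esub> x = x" by (cases x) (simp add: BS_one BS_mult)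
next
  fix x assume x: "x \<in> carrier (BS k)"
  obtain a n where xe: "x = (a, n)" by (cases x)
  let ?y = "(- ((of_int k :: rat) powi (- n)) * a, - n)"
  have "?y \<in> carrier (BS k)" using x xe
    by (auto simp: BS_carrier intro!: inR_mult inR_uminus inR_powi assms)
  moreover have "?y \<otimes>\<^bsub>BS k\<^esub> x = \<one>\<^bsub>BS k\<^esub>" using xe by (simp add: BS_mult BS_one)
  ultimately show "\<exists>y\<in>carrier (BS k). y \<otimes>\<^bsub>BS k\<^esub> x = \<one>\<^bsub>BS k\<^esub>" by blast
qed



lemma final_int:
  fixes k u u' M :: int and i j :: nat
  assumes k: "k \<ge> 2" and ij: "i + j = s" "j < s" and u: "0 < u" "0 < u'" "u' < k * u" "u < k * u'"
    and M: "M = k ^ s - 1" "u * u' + 1 < M"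
    and d1: "M dvd k ^ j * u - u'" and d2: "M dvd k ^ i * u' - u"
  shows "u = u'"
proof -
  have uM: "u < M" "u' < M"
    using u M by (smt (verit, best) mult_le_cancel_left1 mult_le_cancel_right1)+
  obtain c1 where c1: "k ^ j * u - u' = M * c1" using d1 by (auto elim: dvdE)
  obtain c2 where c2: "k ^ i * u' - u = M * c2" using d2 by (auto elim: dvdE)
  show ?thesis
  proof (cases "j = 0")
    case True
    hence "u - u' = M * c1" using c1 by simp
    hence "c1 = 0" using uM u
      by (smt (verit, best) mult_le_cancel_left1 mult_minus_right)
    thus ?thesis using \<open>u - u' = M * c1\<close> by simp
  next
    case False
    hence i1: "i \<ge> 1" using ij by simp
    have kj: "k ^ j \<ge> k" using False k by (metis One_nat_def Suc_leI not_gr0 power_increasing power_one_right linorder_not_less order.trans[of 1 2 k] le_numeral_extra(4) one_le_numeral)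
    have ki: "k ^ i \<ge> k" using i1 k by (metis power_increasing power_one_right le_numeral_extra(4) one_le_numeral order.trans)
    have "c1 \<ge> 0"
    proof (rule ccontr)
      assume "\<not> c1 \<ge> 0"
      hence "M * c1 \<le> - M" using uM u by (smt (verit) mult_le_cancel_left1 mult_minus_right)
      moreover have "k ^ j * u > 0" using u k by simp
      ultimately show False using c1 uM by linarith
    qed
    moreover have "c1 \<noteq> 0"
    proof
      assume "c1 = 0"
      hence "u' = k ^ j * u" using c1 by simp
      moreover have "k ^ j * u \<ge> k * u" using kj u by simp
      ultimately show False using u by linarith
    qed
    ultimately have "c1 \<ge> 1" by linarith
    hence A1: "k ^ j * u \<ge> M + u'" using c1 uM u by (smt (verit) mult_le_cancel_left1)
    have "c2 \<ge> 0"
    proof (rule ccontr)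
      assume "\<not> c2 \<ge> 0"
      hence "M * c2 \<le> - M" using uM u by (smt (verit) mult_le_cancel_left1 mult_minus_right)
      moreover have "k ^ i * u' > 0" using u k by simp
      ultimately show False using c2 uM by linarith
    qed
    moreover have "c2 \<noteq> 0"
    proof
      assume "c2 = 0"
      hence "u = k ^ i * u'" using c2 by simp
      moreover have "k ^ i * u' \<ge> k * u'" using ki u by simp
      ultimately show False using u by linarith
    qed
    ultimately have "c2 \<ge> 1" by linarith
    hence A2: "k ^ i * u' \<ge> M + u" using c2 uM u by (smt (verit) mult_le_cancel_left1)
    have "(k ^ j * u) * (k ^ i * u') \<ge> (M + u') * (M + u)"
      using A1 A2 u uM by (intro mult_mono) auto
    also have "(k ^ j * u) * (k ^ i * u') = (M + 1) * (u * u')"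
      using ij M by (simp add: power_add[symmetric] algebra_simps)
    finally have "(M + 1) * (u * u') \<ge> (M + u') * (M + u)" .
    moreover have "(M + 1) * (u * u') \<le> (M + 1) * (M - 2)"
      using M uM u by (intro mult_left_mono) auto
    moreover have "(M + u') * (M + u) \<ge> M * M" using u uM by (intro mult_mono) auto
    moreover have "(M + 1) * (M - 2) = M * M - M - 2" by (simp add: algebra_simps)
    ultimately show ?thesis using uM u by linarith
  qed
qed



lemma int_dvd_of_R:
  fixes k M n :: int and r :: rat
  assumes "coprime M k" "of_int n = of_int M * r" "inR k r"
  shows "M dvd n"
proof -
  obtain e where "r * of_int k ^ e \<in> \<int>" using assms(3) unfolding inR_def by blast
  then obtain z where z: "r * of_int k ^ e = of_int z" by (metis Ints_cases)
  have "(of_int (n * k ^ e) :: rat) = of_int (M * z)"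
    using assms(2) z by (metis of_int_mult of_int_power mult.assoc)
  hence "n * k ^ e = M * z" by (simp only: of_int_eq_iff)
  hence "M dvd n * k ^ e" by simp
  moreover have "coprime M (k ^ e)" using assms(1) by simp
  ultimately show ?thesis using coprime_dvd_mult_left_iff by blast
qed

lemma coprime_M:
  fixes k :: int assumes "s \<ge> 1" shows "coprime (k ^ s - 1) k"
proof (rule coprimeI)
  fix d assume d1: "d dvd k ^ s - 1" and d2: "d dvd k"
  have "d dvd k ^ s" using dvd_trans[OF d2 dvd_power[of s k]] assms by auto
  hence "d dvd k ^ s - (k ^ s - 1)" using d1 by (rule dvd_diff)
  thus "is_unit d" by simp
qed

lemma powi_cong:
  fixes k :: int and q :: int
  assumes "k \<noteq> 0"
  shows "\<exists>c. inR k c \<and> ((of_int k :: rat) ^ s) powi q - 1 = (of_int k ^ s - 1) * c"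
proof -
  define K where "K = (of_int k :: rat) ^ s"
  have Kz: "K \<noteq> 0" unfolding K_def using assms by simp
  have ex: "\<And>n. \<exists>S. K ^ n - 1 = (K - 1) * of_int S"
  proof -
    fix n
    have "(k ^ s) ^ n - 1 = (k ^ s - 1) * (\<Sum>i<n. (k ^ s) ^ i)" by (rule power_diff_1_eq)
    hence "(of_int ((k ^ s) ^ n - 1) :: rat) = of_int ((k ^ s - 1) * (\<Sum>i<n. (k ^ s) ^ i))"
      by (simp only:)
    hence "K ^ n - 1 = (K - 1) * of_int (\<Sum>i<n. (k ^ s) ^ i)"
      unfolding K_def by (simp only: of_int_diff of_int_mult of_int_power of_int_1)
    thus "\<exists>S. K ^ n - 1 = (K - 1) * of_int S" by blast
  qed
  show ?thesis
  proof (cases "q \<ge> 0")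
    case True
    then obtain n where n: "q = int n" by (metis nonneg_eq_int)
    obtain S where S: "K ^ n - 1 = (K - 1) * of_int S" using ex by blast
    have "K powi q - 1 = (K - 1) * of_int S" using n S by (simp only: power_int_of_nat)
    thus ?thesis unfolding K_def using inR_int by blast
  next
    case False
    then obtain n where n: "q = - int n" by (metis nonpos_int_cases not_le order.strict_implies_order)
    obtain S where S: "K ^ n - 1 = (K - 1) * of_int S" using ex by blast
    have Kn: "K ^ n = of_int k ^ (s * n)" unfolding K_def by (simp only: power_mult)
    have "K powi q = inverse (K ^ n)" using n by (simp only: power_int_minus power_int_of_nat)
    hence "K powi q - 1 = - (K ^ n - 1) / K ^ n" using Kz by (simp add: field_simps)
    also have "\<dots> = (K - 1) * (- of_int S / of_int k ^ (s * n))" using S Kn by simp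
    finally show ?thesis unfolding K_def
      using inR_div_pow[OF inR_uminus[OF inR_int[of k S]]] by blast
  qed
qed

lemma alg_id:
  fixes a K c u u' w :: rat
  assumes "u' = a * (1 + (K - 1) * c) * u + w * (1 - K)"
  shows "a * u - u' = (K - 1) * (w - a * u * c)"
  using assms by (simp add: algebra_simps)

lemma key:
  fixes k u u' m :: int and s :: nat and w :: rat
  assumes k: "k \<ge> 2" and s: "s \<ge> 1" and u: "0 < u" "0 < u'" "u' < k * u" "u < k * u'"
    and M: "u * u' + 1 < k ^ s - 1" and w: "inR k w"
    and eq: "of_int u' = of_int k powi m * of_int u + w * (1 - of_int k ^ s)"
  shows "u = u'"
proof -
  define j where "j = nat (m mod int s)"
  define q where "q = m div int s"
  have kz: "k \<noteq> 0" and kq: "(of_int k :: rat) \<noteq> 0" using k by auto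
  have jl: "j < s" unfolding j_def using s by (simp add: nat_less_iff)
  have mj: "m = int j + int s * q" unfolding j_def q_def using s
    by (simp add: mult.commute)
  have pw: "(of_int k :: rat) powi m = of_int k ^ j * (of_int k ^ s) powi q"
  proof -
    have "(of_int k :: rat) powi m = of_int k powi (int j) * of_int k powi (int s * q)"
      unfolding mj using kq by (rule power_int_add[OF disjI1])
    also have "(of_int k :: rat) powi (int s * q) = (of_int k powi (int s)) powi q"
      by (rule power_int_mult)
    finally show ?thesis by (simp only: power_int_of_nat)
  qed
  obtain c where c: "inR k c" "((of_int k :: rat) ^ s) powi q - 1 = (of_int k ^ s - 1) * c"
    using powi_cong[OF kz] by blast
  have "(of_int (k ^ j * u - u') :: rat) = of_int (k ^ s - 1) * (w - of_int k ^ j * of_int u * c)"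
  proof -
    have P: "((of_int k :: rat) ^ s) powi q = 1 + (of_int k ^ s - 1) * c" using c(2) by simp
    have e2: "(of_int u' :: rat) = of_int k ^ j * (1 + (of_int k ^ s - 1) * c) * of_int u + w * (1 - of_int k ^ s)"
      using eq unfolding pw P by simp
    show ?thesis unfolding of_int_diff of_int_mult of_int_power of_int_1
      using alg_id[OF e2] .
  qed
  moreover have "inR k (w - of_int k ^ j * of_int u * c)"
    using w c(1) inR_int[of k "k ^ j"] by (intro inR_diff inR_mult inR_int) simp_all
  ultimately have d1: "k ^ s - 1 dvd k ^ j * u - u'"
    by (rule int_dvd_of_R[OF coprime_M[OF s]])
  define i where "i = s - j"
  have ij: "i + j = s" unfolding i_def using jl by simp
  have "k ^ i * u' - u = (k ^ s - 1) * u - k ^ i * (k ^ j * u - u')"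
    using ij by (simp add: algebra_simps power_add[symmetric])
  hence d2: "k ^ s - 1 dvd k ^ i * u' - u" using d1 by simp
  show ?thesis using final_int[OF k ij jl u refl M d1 d2] .
qed



theorem corollary5p4:
  fixes k :: int and A :: "(rat \<times> int) set"
  assumes "k \<ge> 2" and "finite A" and "A \<subseteq> carrier (BS k)"
  shows "\<exists>g \<in> carrier (BS k).
           num_conj_classes (BS k) ((\<lambda>x. g \<otimes>\<^bsub>BS k\<^esub> x) ` A) = card A"
proof -
  have kz: "k \<noteq> 0" using assms(1) by simp
  have kq: "(of_int k :: rat) \<noteq> 0" using kz by simp
  interpret G: group "BS k" using BS_group[OF kz] .
  define e where "e (p :: rat \<times> int) = (SOME e. fst p * (of_int k :: rat) ^ e \<in> \<int>)" for p
  have he: "fst p * (of_int k :: rat) ^ e p \<in> \<int>" if "p \<in> A" for p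
  proof -
    have "\<exists>e. fst p * (of_int k :: rat) ^ e \<in> \<int>"
      using that assms(3) BS_carrier[of p k] unfolding inR_def by blast
    thus ?thesis unfolding e_def by (rule someI_ex)
  qed
  define E where "E = (\<Sum>p\<in>A. e p)"
  have hE: "fst p * (of_int k :: rat) ^ E \<in> \<int>" if "p \<in> A" for p
    using inR_mono[OF he[OF that]] member_le_sum[of p A e] that assms(2)
    unfolding E_def by simp
  define X where "X (p :: rat \<times> int) = \<lfloor>fst p * (of_int k :: rat) ^ E\<rfloor>" for p
  have hX: "of_int (X p) = fst p * (of_int k :: rat) ^ E" if "p \<in> A" for p
    using hE[OF that] unfolding X_def by (metis Ints_cases floor_of_int)
  define B where "B = (\<Sum>p\<in>A. \<bar>X p\<bar>)"
  have XB: "\<bar>X p\<bar> \<le> B" if "p \<in> A" for p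
    unfolding B_def using member_le_sum[of p A "\<lambda>p. \<bar>X p\<bar>"] that assms(2) by simp
  define Z where "Z = 3 * B + 1"
  define u where "u (p :: rat \<times> int) = Z + X p" for p
  have ub: "2 * B + 1 \<le> u p" "u p \<le> 4 * B + 1" if "p \<in> A" for p
    using XB[OF that] unfolding u_def Z_def by auto
  define L where "L = (\<Sum>p\<in>A. \<bar>snd p\<bar>)"
  have nL: "\<bar>snd p\<bar> \<le> L" if "p \<in> A" for p
    unfolding L_def using member_le_sum[of p A "\<lambda>p. \<bar>snd p\<bar>"] that assms(2) by simp
  define T where "T = (4 * B + 1) ^ 2 + 3"
  have B0: "B \<ge> 0" unfolding B_def by (simp add: sum_nonneg)
  have L0: "L \<ge> 0" unfolding L_def by (simp add: sum_nonneg)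
  define N where "N = T + L"
  have N0: "N \<ge> 0" unfolding N_def T_def using L0 by simp
  define c where "c = (of_int k :: rat) ^ nat N / of_int k ^ E"
  have cz: "c \<noteq> 0" unfolding c_def using kq by simp
  define g where "g = (c * of_int Z, N)"
  have gc: "g \<in> carrier (BS k)"
  proof -
    have "c * of_int Z = of_int (k ^ nat N * Z) / of_int k ^ E" unfolding c_def by simp
    moreover have "inR k (of_int (k ^ nat N * Z) / of_int k ^ E)" by (rule inR_div_pow[OF inR_int])
    ultimately show ?thesis unfolding g_def BS_carrier by simp
  qed
  have gp: "g \<otimes>\<^bsub>BS k\<^esub> p = (c * of_int (u p), N + snd p)" if "p \<in> A" for p
  proof -
    obtain x n where p: "p = (x, n)" by (cases p)
    have x: "x = of_int (X p) / of_int k ^ E" using hX[OF that] kq p by (simp add: field_simps)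
    have "(of_int k :: rat) powi N = of_int k ^ nat N" using N0
      by (metis nonneg_eq_int power_int_of_nat nat_int)
    hence "c * of_int Z + of_int k powi N * x = c * of_int (u p)"
      unfolding x c_def u_def using kq by (simp add: add_divide_distrib algebra_simps)
    thus ?thesis unfolding g_def p by (simp add: BS_mult)
  qed
  have lev: "N + snd p \<ge> T" if "p \<in> A" for p using nL[OF that] unfolding N_def by simp
  have inj: "inj_on (\<lambda>p. conj_class (BS k) (g \<otimes>\<^bsub>BS k\<^esub> p)) A"
  proof (rule inj_onI)
    fix p p' assume pA: "p \<in> A" and pA': "p' \<in> A"
      and eqc: "conj_class (BS k) (g \<otimes>\<^bsub>BS k\<^esub> p) = conj_class (BS k) (g \<otimes>\<^bsub>BS k\<^esub> p')"
    define v where "v = g \<otimes>\<^bsub>BS k\<^esub> p"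
    define v' where "v' = g \<otimes>\<^bsub>BS k\<^esub> p'"
    have vc: "v \<in> carrier (BS k)" "v' \<in> carrier (BS k)"
      unfolding v_def v'_def using gc pA pA' assms(3) by auto
    have "v' \<in> conj_class (BS k) v'"
      unfolding conj_class_def using vc(2) by (intro CollectI exI[of _ "\<one>\<^bsub>BS k\<^esub>"]) simp
    hence "v' \<in> conj_class (BS k) v" using eqc unfolding v_def v'_def by simp
    then obtain h where hc: "h \<in> carrier (BS k)"
      and hv: "v' = h \<otimes>\<^bsub>BS k\<^esub> v \<otimes>\<^bsub>BS k\<^esub> inv\<^bsub>BS k\<^esub> h"
      unfolding conj_class_def by blast
    have comm: "h \<otimes>\<^bsub>BS k\<^esub> v = v' \<otimes>\<^bsub>BS k\<^esub> h"
      unfolding hv using hc vc by (simp add: G.m_assoc)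
    obtain w m where h: "h = (w, m)" by (cases h)
    have w: "inR k w" using hc h BS_carrier by auto
    define s where "s = N + snd p"
    define s' where "s' = N + snd p'"
    have "(w + of_int k powi m * (c * of_int (u p)), m + s) =
          (c * of_int (u p') + of_int k powi s' * w, s' + m)"
      using comm unfolding h v_def v'_def gp[OF pA] gp[OF pA'] s_def s'_def by (simp add: BS_mult)
    hence ss: "s = s'" and eqw: "w + of_int k powi m * (c * of_int (u p)) = c * of_int (u p') + of_int k powi s' * w"
      by auto
    define sn where "sn = nat s"
    have sT: "s \<ge> T" unfolding s_def using lev[OF pA] .
    have "(4 * B + 1) ^ 2 \<ge> 0" by simp
    hence sn: "int sn = s" unfolding sn_def using sT unfolding T_def by linarith
    have pws: "(of_int k :: rat) powi s' = of_int k ^ sn" using ss sn by (metis power_int_of_nat)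
    have eq: "of_int (u p') = of_int k powi m * of_int (u p) + (w * of_int k ^ E / of_int k ^ nat N) * (1 - of_int k ^ sn)"
    proof -
      have "c * of_int (u p') = c * (of_int k powi m * of_int (u p) + (w / c) * (1 - of_int k ^ sn))"
        using eqw pws cz by (simp add: field_simps)
      hence "of_int (u p') = of_int k powi m * of_int (u p) + (w / c) * (1 - of_int k ^ sn)"
        using cz by simp
      moreover have "w / c = w * of_int k ^ E / of_int k ^ nat N" unfolding c_def using kq by simp
      ultimately show ?thesis by simp
    qed
    have winR: "inR k (w * of_int k ^ E / of_int k ^ nat N)"
      using inR_div_pow[OF inR_mult[OF w inR_int[of k "k ^ E"]]] by simp
    have upos: "0 < u p" "0 < u p'" using ub[OF pA] ub[OF pA'] B0 by linarith+
    have urat: "u p' < k * u p" "u p < k * u p'"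
    proof -
      have "u p' < 2 * u p" "u p < 2 * u p'" using ub[OF pA] ub[OF pA'] by linarith+
      moreover have "2 * u p \<le> k * u p" "2 * u p' \<le> k * u p'" using assms(1) upos by simp_all
      ultimately show "u p' < k * u p" "u p < k * u p'" by linarith+
    qed
    have prod: "u p * u p' \<le> (4 * B + 1) ^ 2"
      using ub[OF pA] ub[OF pA'] upos unfolding power2_eq_square by (intro mult_mono) auto
    have "int sn < 2 ^ sn" by (metis of_nat_less_iff less_exp of_nat_numeral of_nat_power)
    also have "(2::int) ^ sn \<le> k ^ sn" using assms(1) by (intro power_mono) auto
    finally have "int sn < k ^ sn" .
    hence M: "u p * u p' + 1 < k ^ sn - 1" using prod sn sT unfolding T_def by linarith
    have sn1: "sn \<ge> 1" using sn sT \<open>(4 * B + 1) ^ 2 \<ge> 0\<close> unfolding T_def by linarith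
    have "u p = u p'" using key[OF assms(1) sn1 upos urat M winR eq] .
    hence "X p = X p'" unfolding u_def by simp
    hence "fst p * (of_int k :: rat) ^ E = fst p' * of_int k ^ E" using hX pA pA' by metis
    hence "fst p = fst p'" using kq by simp
    moreover have "snd p = snd p'" using ss unfolding s_def s'_def by simp
    ultimately show "p = p'" by (simp add: prod_eq_iff)
  qed
  have "num_conj_classes (BS k) ((\<lambda>x. g \<otimes>\<^bsub>BS k\<^esub> x) ` A)
        = card ((\<lambda>p. conj_class (BS k) (g \<otimes>\<^bsub>BS k\<^esub> p)) ` A)"
    unfolding num_conj_classes_def image_image by simp
  also have "\<dots> = card A" using card_image[OF inj] .
  finally show ?thesis using gc by blast
qed

end
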